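(* The following hold. (1) If $G$ is a finite elementary abelian $2$-group, then $\Gamma^+_{G,H}$ admits a perfect code for every subgroup $H$ of $G$. (2) If $G$ is a finite abelian group of odd order, then $\Gamma^+_{G,H}$ admits a perfect code if and only if $H\in\{\{0\},G\}$. (3) If $n$ is an even positive integer and $H\le\mathbb{Z}_n$, then $\Gamma^+_{\mathbb{Z}_n,H}$ admits a perfect code if and only if $H\in\{\mathbb{Z}_n,\{0\},\langle 2\rangle\}$. (4) If $G=\mathbb{Z}_4^n$ for some $n\ge1$ and $H\le G$, then $\Gamma^+_{G,H}$ admits a perfect code if and only if $H\in\{\{0\},G\}$ or $H$ contains all involutions of $G$.
   Context: Abelian groups are written additively with identity $0$. For a subgroup $H$ of a finite abelian group $G$, the extended subgroup sum graph $\Gamma^+_{G,H}$ is the simple undirected graph with vertex set $G$ in which distinct vertices $x,y$ are adjacent if and only if $x+y\in H$. A perfect code in a graph is a set $C$ of vertices that is independent and such that every vertex not in $C$ is adjacent to exactly one vertex of $C$. An involution is an element of order exactly $2$. *)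

theory Defs
  imports "HOL-Algebra.Algebra"
begin

text \<open>Extended subgroup sum graph of G w.r.t. H (group written multiplicatively in
HOL-Algebra; the group operation plays the role of +): vertex set carrier G,
distinct x, y adjacent iff x \<otimes> y \<in> H.\<close>
definition sum_graph_adj :: "('a, 'b) monoid_scheme \<Rightarrow> 'a set \<Rightarrow> 'a \<Rightarrow> 'a \<Rightarrow> bool" where
  "sum_graph_adj G H x y \<longleftrightarrow>
     x \<in> carrier G \<and> y \<in> carrier G \<and> x \<noteq> y \<and> x \<otimes>\<^bsub>G\<^esub> y \<in> H"

definition perfect_code :: "('a, 'b) monoid_scheme \<Rightarrow> 'a set \<Rightarrow> 'a set \<Rightarrow> bool" where
  "perfect_code G H C \<longleftrightarrow>
     C \<subseteq> carrier G \<and>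
     (\<forall>x\<in>C. \<forall>y\<in>C. \<not> sum_graph_adj G H x y) \<and>
     (\<forall>x\<in>carrier G - C. \<exists>!c. c \<in> C \<and> sum_graph_adj G H x c)"

definition has_perfect_code :: "('a, 'b) monoid_scheme \<Rightarrow> 'a set \<Rightarrow> bool" where
  "has_perfect_code G H \<longleftrightarrow> (\<exists>C. perfect_code G H C)"

definition involutions :: "('a, 'b) monoid_scheme \<Rightarrow> 'a set" where
  "involutions G = {x \<in> carrier G. group.ord G x = 2}"

end

theory Submission
  imports Defs
begin


lemma adj_iff: "sum_graph_adj G H x y \<longleftrightarrow> x \<in> carrier G \<and> y \<in> carrier G \<and> x \<noteq> y \<and> x \<otimes>\<^bsub>G\<^esub> y \<in> H"
  by (simp add: sum_graph_adj_def)

context comm_group begin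

lemma pc_if_trivial:
  assumes "H = {\<one>}" shows "has_perfect_code G H"
proof -
  define s where "s x = (SOME y. y \<in> {x, inv x})" for x
  have s_in: "s x \<in> {x, inv x}" for x unfolding s_def by (rule someI[of _ x]) simp
  have s_inv: "s (inv x) = s x" if "x \<in> carrier G" for x
    using that unfolding s_def by (simp add: insert_commute)
  have adj: "sum_graph_adj G H x y \<longleftrightarrow> x \<in> carrier G \<and> x \<noteq> inv x \<and> y = inv x" for x y
    unfolding adj_iff assms using inv_equality[of x y] inv_closed by (auto simp: r_inv)
  define C where "C = {x \<in> carrier G. x = s x}"
  have "perfect_code G H C"
    unfolding perfect_code_def
  proof (intro conjI ballI)
    show "C \<subseteq> carrier G" unfolding C_def by auto
    fix x y assume "x \<in> C" "y \<in> C"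
    then show "\<not> sum_graph_adj G H x y" unfolding adj C_def using s_inv by auto
  next
    fix x assume x: "x \<in> carrier G - C"
    then have "s x = inv x" "inv x \<noteq> x" using s_in[of x] unfolding C_def by auto
    moreover have "inv x \<in> C" using x s_inv \<open>s x = inv x\<close> unfolding C_def by auto
    ultimately show "\<exists>!c. c \<in> C \<and> sum_graph_adj G H x c" using x unfolding adj by auto
  qed
  then show ?thesis unfolding has_perfect_code_def by blast
qed

lemma pc_if_squares:
  assumes H: "subgroup H G" and sq: "\<forall>x\<in>carrier G. x \<otimes> x \<in> H"
  shows "has_perfect_code G H"
proof -
  interpret S: subgroup H G by fact
  define same where "same x y \<longleftrightarrow> inv x \<otimes> y \<in> H" for x y
  have key: "x \<otimes> y \<in> H \<longleftrightarrow> same x y" if "x \<in> carrier G" "y \<in> carrier G" for x y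
  proof -
    have e: "inv x \<otimes> y = inv (x \<otimes> x) \<otimes> (x \<otimes> y)"
      using that by (simp add: inv_mult m_assoc[symmetric]) (metis inv_closed l_inv l_one m_assoc m_closed one_closed r_one inv_mult_group)
    have e2: "x \<otimes> y = (x \<otimes> x) \<otimes> (inv x \<otimes> y)"
      using that by (simp add: m_assoc[symmetric]) (metis inv_closed r_inv r_one m_assoc)
    show ?thesis unfolding same_def using e e2 that sq by (metis S.m_closed S.m_inv_closed inv_closed m_closed)
  qed
  have same_sym: "same y x" if "same x y" "x \<in> carrier G" "y \<in> carrier G" for x y
    using that unfolding same_def by (metis S.m_inv_closed inv_inv inv_mult_group inv_closed)
  have same_trans: "same x z" if "same x y" "same y z" "x \<in> carrier G" "y \<in> carrier G" "z \<in> carrier G" for x y z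
  proof -
    have "inv x \<otimes> z = (inv x \<otimes> y) \<otimes> (inv y \<otimes> z)"
      using that by (simp add: m_assoc) (metis inv_closed m_assoc r_inv l_one)
    then show ?thesis using that unfolding same_def by (metis S.m_closed)
  qed
  define r where "r x = (SOME y. y \<in> carrier G \<and> same x y)" for x
  have r: "r x \<in> carrier G \<and> same x (r x)" if "x \<in> carrier G" for x
    unfolding r_def using that by (intro someI[of "\<lambda>y. y \<in> carrier G \<and> same x y" x]) (simp add: same_def S.one_closed)
  have r_eq: "r x = r y" if "same x y" "x \<in> carrier G" "y \<in> carrier G" for x y
  proof -
    have "(\<lambda>z. z \<in> carrier G \<and> same x z) = (\<lambda>z. z \<in> carrier G \<and> same y z)"
      using that same_sym same_trans by blast
    then show ?thesis unfolding r_def by simp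
  qed
  define C where "C = {x \<in> carrier G. x = r x}"
  have "perfect_code G H C"
    unfolding perfect_code_def
  proof (intro conjI ballI)
    show "C \<subseteq> carrier G" unfolding C_def by auto
    fix x y assume "x \<in> C" "y \<in> C"
    then show "\<not> sum_graph_adj G H x y" unfolding adj_iff C_def using key r_eq by force
  next
    fix x assume x: "x \<in> carrier G - C"
    then have rx: "r x \<in> carrier G" "same x (r x)" "r x \<noteq> x" using r[of x] unfolding C_def by auto
    have "r (r x) = r x" using r_eq[of x "r x"] rx x by auto
    then have "r x \<in> C" using rx unfolding C_def by auto
    moreover have "sum_graph_adj G H x (r x)" using rx x key unfolding adj_iff by auto
    moreover have "c = r x" if "c \<in> C" "sum_graph_adj G H x c" for c
      using that x key r_eq unfolding adj_iff C_def by force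
    ultimately show "\<exists>!c. c \<in> C \<and> sum_graph_adj G H x c" by blast
  qed
  then show ?thesis unfolding has_perfect_code_def by blast
qed


lemma pc_only_if:
  assumes H: "subgroup H G" and pc: "has_perfect_code G H" and nt: "H \<noteq> {\<one>}"
  shows "\<forall>x\<in>carrier G. x \<otimes> x \<in> H"
proof (rule ccontr)
  interpret S: subgroup H G by fact
  obtain C where C: "perfect_code G H C" using pc unfolding has_perfect_code_def by blast
  have Csub: "C \<subseteq> carrier G" and ind: "\<And>x y. x \<in> C \<Longrightarrow> y \<in> C \<Longrightarrow> \<not> sum_graph_adj G H x y"
    and uq: "\<And>x. x \<in> carrier G \<Longrightarrow> x \<notin> C \<Longrightarrow> \<exists>!c. c \<in> C \<and> sum_graph_adj G H x c"
    using C unfolding perfect_code_def by auto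
  obtain h where h: "h \<in> H" "h \<noteq> \<one>" using nt S.one_closed by blast
  have hc: "h \<in> carrier G" using h S.subset by auto
  have L1: False if z: "z \<in> C" and zz: "z \<otimes> z \<notin> H" for z
  proof -
    have zc: "z \<in> carrier G" using z Csub by auto
    have "inv z \<noteq> z" using zz zc r_inv S.one_closed by metis
    then have a1: "sum_graph_adj G H (inv z) z" using zc unfolding adj_iff by (simp add: l_inv S.one_closed)
    then have nC: "inv z \<notin> C" using ind z by blast
    define w where "w = z \<otimes> h"
    have wc: "w \<in> carrier G" using zc hc w_def by auto
    have wz: "w \<noteq> z"
    proof
      assume "w = z"
      then have "z \<otimes> h = z \<otimes> \<one>" unfolding w_def using zc by simp
      then show False using h hc zc r_cancel[of z h "\<one>"] by simp
    qed
    show False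
    proof (cases "w \<in> C")
      case True
      have "inv z \<noteq> w"
      proof
        assume "inv z = w"
        then have "z \<otimes> w = \<one>" using zc by (metis r_inv)
        then have "(z \<otimes> z) \<otimes> h = \<one>" unfolding w_def using zc hc by (simp add: m_assoc)
        then have "z \<otimes> z = inv h" using zc hc inv_equality[of "z \<otimes> z" h] by simp
        then show False using zz h S.m_inv_closed by auto
      qed
      moreover have "inv z \<otimes> w = h" unfolding w_def using zc hc by (simp add: m_assoc[symmetric] l_inv)
      ultimately have "sum_graph_adj G H (inv z) w" using zc wc h unfolding adj_iff by auto
      then show False using uq[of "inv z"] nC a1 True z wz zc by blast
    next
      case False
      then obtain c where c: "c \<in> C" "sum_graph_adj G H w c" using uq[of w] wc by blast
      have cc: "c \<in> carrier G" using c Csub by auto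
      have "w \<otimes> c \<in> H" using c unfolding adj_iff by auto
      moreover have "z \<otimes> c = inv h \<otimes> (w \<otimes> c)"
      proof -
        have "(z \<otimes> h) \<otimes> c = h \<otimes> (z \<otimes> c)" using zc hc cc by (simp add: m_ac)
        then show ?thesis unfolding w_def using zc hc cc by (simp add: m_assoc[symmetric] l_inv del: l_inv_ex)
      qed
      ultimately have zcH: "z \<otimes> c \<in> H" using h by (simp add: S.m_closed S.m_inv_closed)
      then have "c \<noteq> z" using zz by auto
      then have "sum_graph_adj G H z c" using zcH zc cc unfolding adj_iff by auto
      then show False using ind z c by blast
    qed
  qed
  assume "\<not> (\<forall>x\<in>carrier G. x \<otimes> x \<in> H)"
  then obtain a where a: "a \<in> carrier G" "a \<otimes> a \<notin> H" by blast
  show False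
  proof (cases "a \<in> C")
    case True then show False using L1 a by blast
  next
    case False
    then obtain c where c: "c \<in> C" "sum_graph_adj G H a c" using uq[of a] a by blast
    have cc: "c \<in> carrier G" using c Csub by auto
    have ac: "a \<otimes> c \<in> H" using c unfolding adj_iff by auto
    have "c \<otimes> c \<notin> H"
    proof
      assume "c \<otimes> c \<in> H"
      moreover have "a \<otimes> a = ((a \<otimes> c) \<otimes> (a \<otimes> c)) \<otimes> inv (c \<otimes> c)"
      proof -
        have "(a \<otimes> c) \<otimes> (a \<otimes> c) = (a \<otimes> a) \<otimes> (c \<otimes> c)" using a cc by (simp add: m_ac)
        then show ?thesis using a cc by (simp add: m_assoc r_inv)
      qed
      ultimately have "a \<otimes> a \<in> H" using ac by (simp add: S.m_closed S.m_inv_closed)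
      then show False using a by auto
    qed
    then show False using L1 c by blast
  qed
qed

lemma pc_iff:
  assumes H: "subgroup H G"
  shows "has_perfect_code G H \<longleftrightarrow> H = {\<one>} \<or> (\<forall>x\<in>carrier G. x \<otimes> x \<in> H)"
  using pc_only_if[OF H] pc_if_trivial pc_if_squares[OF H] by blast

end


lemma (in group) ord_eq_2_iff:
  assumes x: "x \<in> carrier G"
  shows "ord x = 2 \<longleftrightarrow> x \<noteq> \<one> \<and> x \<otimes> x = \<one>"
proof -
  have sq: "x [^] (2::nat) = x \<otimes> x" using x by (simp add: numeral_2_eq_2)
  show ?thesis
  proof
    assume "ord x = 2"
    then show "x \<noteq> \<one> \<and> x \<otimes> x = \<one>" using x ord_eq_1[of x] pow_ord_eq_1[of x] sq by auto
  next
    assume a: "x \<noteq> \<one> \<and> x \<otimes> x = \<one>"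
    then have d: "ord x dvd 2" using pow_eq_id[OF x, of 2] sq by simp
    have "ord x \<noteq> 1" using a ord_eq_1[OF x] by simp
    moreover have "ord x \<le> 2" using d by (simp add: dvd_imp_le)
    moreover have "ord x \<noteq> 0" using d by (metis dvd_0_left zero_neq_numeral)
    ultimately show "ord x = 2" using d by (metis One_nat_def le_Suc_eq le_zero_eq numeral_2_eq_2)
  qed
qed

lemma part1:
  assumes "comm_group G" "finite (carrier G)" "\<forall>x\<in>carrier G. x \<otimes>\<^bsub>G\<^esub> x = \<one>\<^bsub>G\<^esub>" "subgroup H G"
  shows "has_perfect_code G H"
  using comm_group.pc_if_squares[OF assms(1) assms(4)] assms(3) subgroup.one_closed[OF assms(4)] by auto

lemma (in comm_group) part2:
  assumes od: "odd (order G)" and H: "subgroup H G"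
  shows "has_perfect_code G H \<longleftrightarrow> H = {\<one>} \<or> H = carrier G"
proof -
  interpret S: subgroup H G by fact
  have "(\<forall>x\<in>carrier G. x \<otimes> x \<in> H) \<longleftrightarrow> H = carrier G"
  proof
    assume sqs: "\<forall>x\<in>carrier G. x \<otimes> x \<in> H"
    obtain k where k: "order G = Suc (2 * k)" using od by (metis oddE Suc_eq_plus1 add.commute)
    have "x \<in> H" if x: "x \<in> carrier G" for x
    proof -
      have "x [^] Suc k \<otimes> x [^] Suc k = x [^] (Suc (2*k)) \<otimes> x"
        using x nat_pow_mult[of x "Suc k" "Suc k"] by (simp add: mult_2)
      also have "\<dots> = x" using pow_order_eq_1[OF x] k x by simp
      finally show ?thesis using sqs x by (metis nat_pow_closed)
    qed
    then show "H = carrier G" using S.subset by auto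
  qed auto
  then show ?thesis using pc_iff[OF H] by auto
qed


lemma part3:
  fixes n :: nat
  assumes n: "n > 0" "even n" and H: "subgroup H (integer_mod_group n)"
  shows "has_perfect_code (integer_mod_group n) H \<longleftrightarrow>
              H = carrier (integer_mod_group n) \<or> H = {0} \<or>
              H = generate (integer_mod_group n) {2 mod int n}"
proof -
  let ?Z = "integer_mod_group n"
  let ?t = "2 mod int n"
  define E where "E = generate ?Z {?t}"
  interpret Z: group ?Z by simp
  interpret S: subgroup H ?Z by fact
  have car: "carrier ?Z = {0..<int n}" using n by (simp add: carrier_integer_mod_group)
  have tc: "?t \<in> carrier ?Z" using n car by simp
  have Egen: "E = {?t [^]\<^bsub>?Z\<^esub> (k::int) | k. k \<in> UNIV}" unfolding E_def by (rule Z.generate_pow[OF tc])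
  have sqE: "(x + x) mod int n \<in> E" for x :: int
  proof -
    have "(x + x) mod int n = (x * ?t) mod int n" by (simp add: mod_mult_right_eq mult_2_right)
    then show ?thesis unfolding Egen by (auto simp: int_pow_integer_mod_group)
  qed
  have evE: "y \<in> E" if "y \<in> carrier ?Z" "even y" for y
  proof -
    have e: "y div 2 + y div 2 = y" using that(2) by (metis dvd_mult_div_cancel mult_2)
    have "y mod int n = y" using that(1) car by (simp add: mod_pos_pos_trivial)
    then have "y = (y div 2 + y div 2) mod int n" using e by simp
    then show ?thesis using sqE by metis
  qed
  have Esub: "subgroup E ?Z" unfolding E_def using tc by (simp add: Z.generate_is_subgroup)
  have pc: "has_perfect_code ?Z H \<longleftrightarrow> H = {0} \<or> (\<forall>x\<in>carrier ?Z. (x + x) mod int n \<in> H)"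
    using comm_group.pc_iff[OF abelian_integer_mod_group H] by simp
  show ?thesis
  proof
    assume "has_perfect_code ?Z H"
    then consider (triv) "H = {0}" | (sq) "\<forall>x\<in>carrier ?Z. (x + x) mod int n \<in> H" using pc by blast
    then show "H = carrier ?Z \<or> H = {0} \<or> H = generate ?Z {?t}"
    proof cases
      case triv then show ?thesis by simp
    next
      case sq
      have "n \<noteq> 1" using n(2) by auto
      then have "1 \<in> carrier ?Z" by simp
      then have "(1 + 1) mod int n \<in> H" using sq by blast
      then have "?t \<in> H" by simp
      then have EH: "E \<subseteq> H" unfolding E_def using Z.generate_subgroup_incl[OF _ H] by simp
      show ?thesis
      proof (cases "\<forall>y\<in>H. even y")
        case True
        then have "H \<subseteq> E" using evE S.subset by blast
        then show ?thesis using EH unfolding E_def by blast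
      next
        case False
        then obtain q where q: "q \<in> H" "odd q" by blast
        have "y \<in> H" if y: "y \<in> carrier ?Z" for y
        proof (cases "even y")
          case True then show ?thesis using evE y EH by blast
        next
          case False
          define d where "d = (y - q) mod int n"
          have "even (y - q)" using False q by simp
          moreover have "even (int n)" using n by simp
          ultimately have "even d" unfolding d_def by (rule dvd_mod)
          moreover have "d \<in> carrier ?Z" unfolding d_def car using n by simp
          ultimately have dH: "d \<in> H" using evE EH by blast
          have "(q + d) mod int n = y" unfolding d_def using y car by (simp add: mod_add_right_eq)
          then show ?thesis using S.m_closed[OF q(1) dH] by simp
        qed
        then show ?thesis using S.subset by blast
      qed
    qed
  next
    assume "H = carrier ?Z \<or> H = {0} \<or> H = generate ?Z {?t}"
    moreover have "(x + x) mod int n \<in> carrier ?Z" for x using car n by simp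
    ultimately show "has_perfect_code ?Z H" unfolding pc using sqE unfolding E_def by blast
  qed
qed



lemma arith4a: "0 \<le> (a::int) \<Longrightarrow> a < 4 \<Longrightarrow> (a + a) mod 4 = 0 \<Longrightarrow> (a div 2 + a div 2) mod 4 = a"
  by presburger

lemma arith4b: "(((a::int) + a) mod 4 + (a + a) mod 4) mod 4 = 0"
  by (simp add: mod_add_eq) presburger

lemma part4:
  fixes n :: nat
  defines "P \<equiv> product_group {..<n} (\<lambda>_. integer_mod_group 4)"
  assumes H: "subgroup H P"
  shows "has_perfect_code P H \<longleftrightarrow> H = {\<one>\<^bsub>P\<^esub>} \<or> H = carrier P \<or> involutions P \<subseteq> H"
proof -
  have gP: "group P" unfolding P_def by (rule product_group) simp
  have car: "carrier P = (\<Pi>\<^sub>E i\<in>{..<n}. {0..<4})" unfolding P_def by (simp add: carrier_integer_mod_group)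
  have mul: "x \<otimes>\<^bsub>P\<^esub> y = (\<lambda>i\<in>{..<n}. (x i + y i) mod 4)" for x y unfolding P_def by simp
  have one: "\<one>\<^bsub>P\<^esub> = (\<lambda>i\<in>{..<n}. 0)" unfolding P_def by simp
  have cP: "comm_group P"
    by (rule group.group_comm_groupI[OF gP]) (simp add: mul add.commute)
  interpret comm_group P by fact
  interpret S: subgroup H P by fact
  have A: "\<exists>x\<in>carrier P. x \<otimes>\<^bsub>P\<^esub> x = y" if y: "y \<in> involutions P" for y
  proof -
    have yc: "y \<in> carrier P" and "ord y = 2" using y unfolding involutions_def by auto
    then have yy1: "y \<otimes>\<^bsub>P\<^esub> y = \<one>\<^bsub>P\<^esub>" using ord_eq_2_iff by blast
    have yy: "(y i + y i) mod 4 = 0" if "i < n" for i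
      using fun_cong[OF yy1[unfolded mul one], of i] that by simp
    have yr: "0 \<le> y i \<and> y i < 4" if "i < n" for i using yc that unfolding car by (auto simp: PiE_iff)
    define x where "x = (\<lambda>i\<in>{..<n}. y i div 2)"
    have xr: "0 \<le> y i div 2 \<and> y i div 2 < 4" if "i < n" for i using yr[OF that] by presburger
    have "x \<in> carrier P" unfolding car x_def using xr by (auto simp: PiE_iff)
    moreover have "x \<otimes>\<^bsub>P\<^esub> x = y"
      unfolding mul
    proof (rule ext)
      fix i show "(\<lambda>i\<in>{..<n}. (x i + x i) mod 4) i = y i"
      proof (cases "i < n")
        case True
        have e: "(y i div 2 + y i div 2) mod 4 = y i"
          using arith4a[of "y i"] yr[OF True] yy[OF True] by linarith
        have "(\<lambda>i\<in>{..<n}. (x i + x i) mod 4) i = (y i div 2 + y i div 2) mod 4"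
          using True unfolding x_def by simp
        then show ?thesis using e by (rule trans)
      next
        case False
        have "y \<in> (\<Pi>\<^sub>E i\<in>{..<n}. {0..<4})" using yc car by blast
        then have "y i = undefined" using False by (intro PiE_arb[of y "{..<n}"]) auto
        then show ?thesis using False by simp
      qed
    qed
    ultimately show ?thesis by blast
  qed
  have B: "x \<otimes>\<^bsub>P\<^esub> x = \<one>\<^bsub>P\<^esub> \<or> x \<otimes>\<^bsub>P\<^esub> x \<in> involutions P" if x: "x \<in> carrier P" for x
  proof -
    define z where "z = x \<otimes>\<^bsub>P\<^esub> x"
    have zc: "z \<in> carrier P" unfolding z_def using x by simp
    have "z \<otimes>\<^bsub>P\<^esub> z = \<one>\<^bsub>P\<^esub>"
      unfolding one
    proof (rule ext)
      fix i show "(z \<otimes>\<^bsub>P\<^esub> z) i = (\<lambda>i\<in>{..<n}. 0) i"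
      proof (cases "i < n")
        case True
        have "(z \<otimes>\<^bsub>P\<^esub> z) i = (((x i + x i) mod 4) + ((x i + x i) mod 4)) mod 4"
          using True unfolding z_def mul by simp
        then show ?thesis using True arith4b[of "x i"] by simp
      next
        case False then show ?thesis unfolding mul by simp
      qed
    qed
    then have "z = \<one>\<^bsub>P\<^esub> \<or> ord z = 2" using ord_eq_2_iff[OF zc] by blast
    then show ?thesis using zc unfolding z_def involutions_def by auto
  qed
  have "(\<forall>x\<in>carrier P. x \<otimes>\<^bsub>P\<^esub> x \<in> H) \<longleftrightarrow> H = carrier P \<or> involutions P \<subseteq> H"
  proof
    assume "\<forall>x\<in>carrier P. x \<otimes>\<^bsub>P\<^esub> x \<in> H"
    then have "involutions P \<subseteq> H" using A by blast
    then show "H = carrier P \<or> involutions P \<subseteq> H" by blast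
  next
    assume hyp: "H = carrier P \<or> involutions P \<subseteq> H"
    show "\<forall>x\<in>carrier P. x \<otimes>\<^bsub>P\<^esub> x \<in> H"
    proof
      fix x assume x: "x \<in> carrier P"
      show "x \<otimes>\<^bsub>P\<^esub> x \<in> H"
      proof (cases "H = carrier P")
        case True then show ?thesis using x by simp
      next
        case False
        then have "involutions P \<subseteq> H" using hyp by blast
        note inH = this
        have oH: "\<one>\<^bsub>P\<^esub> \<in> H" by (rule S.one_closed)
        from B[OF x] show ?thesis
        proof
          assume "x \<otimes>\<^bsub>P\<^esub> x = \<one>\<^bsub>P\<^esub>"
          then show ?thesis using oH by (rule ssubst[where P="\<lambda>u. u \<in> H"])
        next
          assume "x \<otimes>\<^bsub>P\<^esub> x \<in> involutions P"
          then show ?thesis using inH by (rule subsetD[rotated])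
        qed
      qed
    qed
  qed
  then show ?thesis using pc_iff[OF H] by blast
qed

theorem corollary6p2:
  shows
   "(\<forall>(G :: ('a, 'b) monoid_scheme) H.
        comm_group G \<and> finite (carrier G) \<and>
        (\<forall>x\<in>carrier G. x \<otimes>\<^bsub>G\<^esub> x = \<one>\<^bsub>G\<^esub>) \<and> subgroup H G
        \<longrightarrow> has_perfect_code G H)
  \<and> (\<forall>(G :: ('c, 'd) monoid_scheme) H.
        comm_group G \<and> finite (carrier G) \<and> odd (order G) \<and> subgroup H G
        \<longrightarrow> (has_perfect_code G H \<longleftrightarrow> H = {\<one>\<^bsub>G\<^esub>} \<or> H = carrier G))
  \<and> (\<forall>(n :: nat) H.
        n > 0 \<and> even n \<and> subgroup H (integer_mod_group n)
        \<longrightarrow> (has_perfect_code (integer_mod_group n) H \<longleftrightarrow>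
              H = carrier (integer_mod_group n) \<or> H = {0} \<or>
              H = generate (integer_mod_group n) {2 mod int n}))
  \<and> (\<forall>(n :: nat) H.
        n \<ge> 1 \<and> subgroup H (product_group {..<n} (\<lambda>_. integer_mod_group 4))
        \<longrightarrow> (has_perfect_code (product_group {..<n} (\<lambda>_. integer_mod_group 4)) H \<longleftrightarrow>
              H = {\<one>\<^bsub>product_group {..<n} (\<lambda>_. integer_mod_group 4)\<^esub>} \<or>
              H = carrier (product_group {..<n} (\<lambda>_. integer_mod_group 4)) \<or>
              involutions (product_group {..<n} (\<lambda>_. integer_mod_group 4)) \<subseteq> H))"
    apply (intro conjI allI impI)
  subgoal for G H using part1[of G H] by blast
  subgoal for G H using comm_group.part2[of G H] by blast
  subgoal for n H using part3[of n H] by blast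
  subgoal for n H using part4[where n=n and H=H] by blast
  done

end
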